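(* For every temporal oriented tree $\mathcal T$, the connectivity graph $G$ of $\mathcal T$ contains no anti-hole, i.e., no induced subgraph isomorphic to the complement of a cycle of length at least $5$.
   Context: A temporal digraph is a pair $(D,\lambda)$ with $D=(V,A)$ a finite digraph and $\lambda:A\to 2^{\{1,\dots,t_{\max}\}}$ giving the time-steps at which each arc is active. A temporal oriented tree $\mathcal T=(T,\lambda)$ is one whose underlying digraph $T$ is an orientation of a tree. A temporal path is a sequence $(v_1,v_2,t_1),\dots,(v_{k-1},v_k,t_{k-1})$ with pairwise distinct $v_i$, $\overrightarrow{v_iv_{i+1}}\in A$, $t_i\in\lambda(\overrightarrow{v_iv_{i+1}})$ and $t_1<\dots<t_{k-1}$. Two vertices $u\ne v$ are temporally connected if there is a temporal path from $u$ to $v$ or from $v$ to $u$. The connectivity graph of $\mathcal T$ is the undirected graph $G$ with $V(G)=V(T)$ and $uv\in E(G)$ iff $u\neq v$ and $u,v$ are temporally connected. *)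

theory Defs
  imports Main
begin

definition und_adj :: "('a \<times> 'a) set \<Rightarrow> 'a \<Rightarrow> 'a \<Rightarrow> bool" where
  "und_adj A u v \<longleftrightarrow> (u, v) \<in> A \<or> (v, u) \<in> A"

definition und_connected :: "'a set \<Rightarrow> ('a \<times> 'a) set \<Rightarrow> bool" where
  "und_connected V A \<longleftrightarrow>
     (\<forall>u\<in>V. \<forall>v\<in>V. (u, v) \<in> ({(x, y). x \<in> V \<and> y \<in> V \<and> und_adj A x y})\<^sup>*)"

definition und_cycle :: "'a set \<Rightarrow> ('a \<times> 'a) set \<Rightarrow> 'a list \<Rightarrow> bool" where
  "und_cycle V A cs \<longleftrightarrow> length cs \<ge> 3 \<and> distinct cs \<and> set cs \<subseteq> V \<and>
     (\<forall>i < length cs. und_adj A (cs ! i) (cs ! ((i + 1) mod length cs)))"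

definition oriented_tree :: "'a set \<Rightarrow> ('a \<times> 'a) set \<Rightarrow> bool" where
  "oriented_tree V A \<longleftrightarrow> finite V \<and> V \<noteq> {} \<and> A \<subseteq> V \<times> V \<and>
     (\<forall>v. (v, v) \<notin> A) \<and> (\<forall>u v. (u, v) \<in> A \<longrightarrow> (v, u) \<notin> A) \<and>
     und_connected V A \<and> (\<nexists>cs. und_cycle V A cs)"

definition temporal_path ::
  "('a \<times> 'a) set \<Rightarrow> ('a \<times> 'a \<Rightarrow> nat set) \<Rightarrow> 'a list \<Rightarrow> nat list \<Rightarrow> bool" where
  "temporal_path A lam vs ts \<longleftrightarrow> vs \<noteq> [] \<and> length ts = length vs - 1 \<and> distinct vs \<and>
     (\<forall>i < length ts. (vs ! i, vs ! Suc i) \<in> A \<and> ts ! i \<in> lam (vs ! i, vs ! Suc i)) \<and>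
     sorted_wrt (<) ts"

definition temporal_path_from_to ::
  "('a \<times> 'a) set \<Rightarrow> ('a \<times> 'a \<Rightarrow> nat set) \<Rightarrow> 'a \<Rightarrow> 'a \<Rightarrow> bool" where
  "temporal_path_from_to A lam u v \<longleftrightarrow>
     (\<exists>vs ts. temporal_path A lam vs ts \<and> hd vs = u \<and> last vs = v)"

definition conn_edge ::
  "'a set \<Rightarrow> ('a \<times> 'a) set \<Rightarrow> ('a \<times> 'a \<Rightarrow> nat set) \<Rightarrow> 'a \<Rightarrow> 'a \<Rightarrow> bool" where
  "conn_edge V A lam u v \<longleftrightarrow> u \<in> V \<and> v \<in> V \<and> u \<noteq> v \<and>
     (temporal_path_from_to A lam u v \<or> temporal_path_from_to A lam v u)"

definition has_antihole :: "'a set \<Rightarrow> ('a \<Rightarrow> 'a \<Rightarrow> bool) \<Rightarrow> bool" where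
  "has_antihole V E \<longleftrightarrow> (\<exists>k::nat. \<exists>f::nat \<Rightarrow> 'a. k \<ge> 5 \<and> inj_on f {0..<k} \<and> f ` {0..<k} \<subseteq> V \<and>
     (\<forall>i < k. \<forall>j < k. i \<noteq> j \<longrightarrow>
        (E (f i) (f j) \<longleftrightarrow> \<not> (j = (i + 1) mod k \<or> i = (j + 1) mod k))))"

end

theory Submission
  imports Defs
begin

fun uwalk :: "('a \<times> 'a) set \<Rightarrow> 'a list \<Rightarrow> bool" where
  "uwalk A [] = True"
| "uwalk A [x] = True"
| "uwalk A (x # y # r) = (und_adj A x y \<and> uwalk A (y # r))"

fun dwalk :: "('a \<times> 'a) set \<Rightarrow> 'a list \<Rightarrow> bool" where
  "dwalk A [] = True"
| "dwalk A [x] = True"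
| "dwalk A (x # y # r) = ((x, y) \<in> A \<and> dwalk A (y # r))"

lemma und_adj_sym: "und_adj A x y = und_adj A y x" by (auto simp: und_adj_def)

lemma uwalk_Cons: "uwalk A (x # xs) \<longleftrightarrow> uwalk A xs \<and> (xs \<noteq> [] \<longrightarrow> und_adj A x (hd xs))"
  by (cases xs) auto

lemma dwalk_Cons: "dwalk A (x # xs) \<longleftrightarrow> dwalk A xs \<and> (xs \<noteq> [] \<longrightarrow> (x, hd xs) \<in> A)"
  by (cases xs) auto

lemma uwalk_append: "uwalk A (xs @ ys) \<longleftrightarrow> uwalk A xs \<and> uwalk A ys \<and> (xs \<noteq> [] \<longrightarrow> ys \<noteq> [] \<longrightarrow> und_adj A (last xs) (hd ys))"
  by (induction xs) (auto simp: uwalk_Cons)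

lemma dwalk_append: "dwalk A (xs @ ys) \<longleftrightarrow> dwalk A xs \<and> dwalk A ys \<and> (xs \<noteq> [] \<longrightarrow> ys \<noteq> [] \<longrightarrow> (last xs, hd ys) \<in> A)"
  by (induction xs) (auto simp: dwalk_Cons)

lemma uwalk_rev: "uwalk A (rev xs) = uwalk A xs"
  by (induction xs) (auto simp: uwalk_append uwalk_Cons und_adj_sym last_rev)

lemma dwalk_uwalk: "dwalk A xs \<Longrightarrow> uwalk A xs"
  by (induction xs rule: dwalk.induct) (auto simp: und_adj_def)

lemma dwalk_nth: "dwalk A xs \<longleftrightarrow> (\<forall>i. Suc i < length xs \<longrightarrow> (xs!i, xs!Suc i) \<in> A)"
proof (induction xs rule: dwalk.induct)
  case (3 A x y r)
  show ?case
  proof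
    assume h: "dwalk A (x # y # r)"
    show "\<forall>i. Suc i < length (x # y # r) \<longrightarrow> ((x # y # r) ! i, (x # y # r) ! Suc i) \<in> A"
    proof (intro allI impI)
      fix i assume "Suc i < length (x # y # r)"
      then show "((x # y # r) ! i, (x # y # r) ! Suc i) \<in> A"
        using h 3 by (cases i) auto
    qed
  next
    assume h: "\<forall>i. Suc i < length (x # y # r) \<longrightarrow> ((x # y # r) ! i, (x # y # r) ! Suc i) \<in> A"
    have "(x, y) \<in> A" using h[rule_format, of 0] by simp
    moreover have "dwalk A (y # r)" using 3 h
      by (metis Suc_less_eq length_Cons nth_Cons_Suc)
    ultimately show "dwalk A (x # y # r)" by simp
  qed
qed auto

lemma tp_dwalk: "temporal_path A lam vs ts \<Longrightarrow> dwalk A vs"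
  unfolding temporal_path_def dwalk_nth by auto

lemma shortcut:
  "uwalk A xs \<Longrightarrow> xs \<noteq> [] \<Longrightarrow> \<exists>ys. uwalk A ys \<and> distinct ys \<and> ys \<noteq> [] \<and> hd ys = hd xs \<and> last ys = last xs \<and> set ys \<subseteq> set xs"
proof (induction xs)
  case Nil then show ?case by simp
next
  case (Cons x xs)
  show ?case
  proof (cases "xs = []")
    case True then show ?thesis by (intro exI[of _ "[x]"]) auto
  next
    case False
    with Cons obtain ys where ys: "uwalk A ys" "distinct ys" "ys \<noteq> []" "hd ys = hd xs" "last ys = last xs" "set ys \<subseteq> set xs"
      by (auto simp: uwalk_Cons)
    have adj: "und_adj A x (hd ys)" using Cons.prems False ys by (auto simp: uwalk_Cons)
    show ?thesis
    proof (cases "x \<in> set ys")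
      case True
      then obtain ys1 ys2 where sp: "ys = ys1 @ x # ys2" by (meson split_list)
      show ?thesis
        apply (rule exI[of _ "x # ys2"])
        using ys sp False by (auto simp: uwalk_append)
    next
      case nf: False
      show ?thesis
        apply (rule exI[of _ "x # ys"])
        using ys nf adj False by (auto simp: uwalk_Cons)
    qed
  qed
qed

lemma uwalk_adj_V: "A \<subseteq> V \<times> V \<Longrightarrow> uwalk A xs \<Longrightarrow> length xs \<ge> 2 \<Longrightarrow> set xs \<subseteq> V"
proof (induction xs rule: uwalk.induct)
  case (3 A x y r)
  then show ?case by (cases r) (auto simp: und_adj_def)
qed simp_all

lemma uwalk_nth: "uwalk A xs \<Longrightarrow> Suc i < length xs \<Longrightarrow> und_adj A (xs!i) (xs!Suc i)"
proof (induction xs arbitrary: i rule: uwalk.induct)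
  case (3 A x y r)
  then show ?case by (cases i) auto
qed auto


lemma mk_cycle:
  assumes AV: "A \<subseteq> V \<times> V" and w: "uwalk A cs" and d: "distinct cs" and l: "length cs \<ge> 3"
    and c: "und_adj A (last cs) (hd cs)"
  shows "und_cycle V A cs"
proof -
  have sV: "set cs \<subseteq> V" using uwalk_adj_V[OF AV w] l by simp
  have ne: "cs \<noteq> []" using l by auto
  have adj: "\<forall>i < length cs. und_adj A (cs ! i) (cs ! ((i + 1) mod length cs))"
  proof (intro allI impI)
    fix i assume i: "i < length cs"
    show "und_adj A (cs ! i) (cs ! ((i + 1) mod length cs))"
    proof (cases "Suc i < length cs")
      case True then show ?thesis using uwalk_nth[OF w True] by simp
    next
      case False
      then have ii: "i = length cs - 1" using i by simp
      then have "Suc i = length cs" using ne by simp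
      then have "(i + 1) mod length cs = 0" by simp
      then show ?thesis using c ne ii by (simp add: last_conv_nth hd_conv_nth)
    qed
  qed
  show ?thesis unfolding und_cycle_def using sV d l adj by blast
qed

lemma two_paths_cycle:
  assumes AV: "A \<subseteq> V \<times> V"
    and p: "uwalk A (a # p)" "distinct (a # p)" and q: "uwalk A (a # q)" "distinct (a # q)"
    and ne: "p \<noteq> []" "q \<noteq> []" and hd: "hd p \<noteq> hd q" and last: "last p = last q"
  shows "\<exists>cs. und_cycle V A cs"
proof -
  have "\<exists>m\<in>set p. m \<in> set q" using ne last by (metis last_in_set)
  then obtain p1 m p2 where sp: "p = p1 @ m # p2" "m \<in> set q" "\<forall>y\<in>set p1. y \<notin> set q"
    using split_list_first_prop[of p "\<lambda>m. m \<in> set q"] by blast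
  obtain q1 q2 where sq: "q = q1 @ m # q2" using sp(2) by (meson split_list)
  define cs where "cs = (a # p1) @ (m # rev q1)"
  have "uwalk A ((a # p1 @ [m]) @ p2)" using p(1) unfolding sp(1) by simp
  then have w1: "uwalk A (a # p1 @ [m])" unfolding uwalk_append by simp
  have "uwalk A ((a # q1 @ [m]) @ q2)" using q(1) unfolding sq by simp
  then have "uwalk A (a # q1 @ [m])" unfolding uwalk_append by simp
  then have w2: "uwalk A (q1 @ [m])" by (simp add: uwalk_Cons)
  have "uwalk A (m # rev q1)" using w2 uwalk_rev[of A "q1 @ [m]"] by simp
  moreover have "uwalk A (a # p1)" "und_adj A (last (a # p1)) m"
    using w1 uwalk_append[of A "a # p1" "[m]"] by auto
  ultimately have wc: "uwalk A cs" unfolding cs_def uwalk_append by simp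
  have dc: "distinct cs" unfolding cs_def using p(2) q(2) sp sq by auto
  have lc: "length cs \<ge> 3"
  proof -
    have "p1 \<noteq> [] \<or> q1 \<noteq> []" using hd sp sq by auto
    then show ?thesis unfolding cs_def by (auto simp: Suc_le_eq)
  qed
  have "last cs = hd q" unfolding cs_def using sq by (cases q1) (auto simp: last_rev)
  moreover have "und_adj A a (hd q)" using q(1) ne by (simp add: uwalk_Cons)
  ultimately have "und_adj A (last cs) (hd cs)" unfolding cs_def by (simp add: und_adj_sym)
  then show ?thesis using mk_cycle[OF AV wc dc lc] by blast
qed

lemma unique_path:
  assumes T: "oriented_tree V A"
  shows "uwalk A p \<Longrightarrow> distinct p \<Longrightarrow> uwalk A q \<Longrightarrow> distinct q \<Longrightarrow> p \<noteq> [] \<Longrightarrow> q \<noteq> []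
     \<Longrightarrow> hd p = hd q \<Longrightarrow> last p = last q \<Longrightarrow> p = q"
proof (induction p arbitrary: q)
  case Nil then show ?case by simp
next
  case (Cons a p)
  obtain q' where q: "q = a # q'" using Cons.prems by (cases q) auto
  have AV: "A \<subseteq> V \<times> V" using T by (simp add: oriented_tree_def)
  show ?case
  proof (cases "p = []")
    case True
    have "q' = []"
    proof (rule ccontr)
      assume "q' \<noteq> []"
      then have "last q = last q'" "last q' \<in> set q'" using q by auto
      moreover have "last q = a" using Cons.prems True by simp
      ultimately show False using Cons.prems(4) q by auto
    qed
    then show ?thesis using q True by simp
  next
    case pne: False
    show ?thesis
    proof (cases "q' = []")
      case True
      have "last p \<in> set p" "last (a # p) = last p" using pne by auto
      moreover have "last q = a" using q True by simp
      ultimately show ?thesis using Cons.prems(2,8) by auto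
    next
      case qne: False
      show ?thesis
      proof (cases "hd p = hd q'")
        case True
        have "p = q'" apply (rule Cons.IH)
          using Cons.prems q pne qne True by (auto simp: uwalk_Cons)
        then show ?thesis using q by simp
      next
        case False
        have "\<exists>cs. und_cycle V A cs"
          apply (rule two_paths_cycle[OF AV, of a p q'])
          using Cons.prems q pne qne False by auto
        then show ?thesis using T by (simp add: oriented_tree_def)
      qed
    qed
  qed
qed

lemma tp_basic: "temporal_path A lam vs ts \<Longrightarrow> vs \<noteq> [] \<and> distinct vs \<and> dwalk A vs \<and> uwalk A vs"
proof -
  assume h: "temporal_path A lam vs ts"
  have "dwalk A vs" using tp_dwalk[OF h] .
  moreover have "uwalk A vs" using dwalk_uwalk[OF calculation] .
  moreover have "vs \<noteq> [] \<and> distinct vs" using h unfolding temporal_path_def by blast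
  ultimately show ?thesis by blast
qed

lemma opp:
  assumes T: "oriented_tree V A"
    and p: "temporal_path A lam vs1 ts1" and q: "temporal_path A lam vs2 ts2"
    and x1: "last vs1 = x" and x2: "hd vs2 = x" and w: "w \<in> set vs1" "w \<in> set vs2" "w \<noteq> x"
  shows False
proof -
  have p': "vs1 \<noteq> []" "distinct vs1" "dwalk A vs1" "uwalk A vs1" using tp_basic[OF p] by auto
  have q': "vs2 \<noteq> []" "distinct vs2" "dwalk A vs2" "uwalk A vs2" using tp_basic[OF q] by auto
  obtain s1 s2 where s: "vs1 = s1 @ w # s2" using w(1) by (meson split_list)
  have "s2 \<noteq> []" using s x1 w(3) by auto
  then obtain s2' where s2: "s2 = s2' @ [x]"
  proof -
    assume r: "\<And>s2'. s2 = s2' @ [x] \<Longrightarrow> thesis"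
    have "last s2 = x" using s x1 \<open>s2 \<noteq> []\<close> by simp
    then have "s2 = butlast s2 @ [x]" using \<open>s2 \<noteq> []\<close> by (metis append_butlast_last_id)
    then show thesis by (rule r)
  qed
  obtain r1 r2 where r: "vs2 = r1 @ w # r2" using w(2) by (meson split_list)
  have "r1 \<noteq> []" using r x2 w(3) by auto
  then obtain r1' where r1: "r1 = x # r1'" using r x2 by (cases r1) auto
  define P where "P = rev (w # s2' @ [x])"
  define Q where "Q = x # r1' @ [w]"
  have "uwalk A (s1 @ ((w # s2' @ [x])))" using p'(4) s s2 by simp
  then have "uwalk A (w # s2' @ [x])" unfolding uwalk_append by simp
  then have uP: "uwalk A P" unfolding P_def uwalk_rev .
  have "uwalk A ((x # r1' @ [w]) @ r2)" using q'(4) r r1 by simp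
  then have uQ: "uwalk A Q" unfolding Q_def uwalk_append by simp
  have dP: "distinct P" using p'(2) s s2 unfolding P_def by auto
  have dQ: "distinct Q" using q'(2) r r1 unfolding Q_def by auto
  have "P = Q" apply (rule unique_path[OF T uP dP uQ dQ])
    unfolding P_def Q_def by auto
  then have "rev (w # s2') = r1' @ [w]" unfolding P_def Q_def by simp
  then have "hd (rev (w # s2')) = hd (r1' @ [w])" by (rule arg_cong)
  then have bc: "last (w # s2') = hd (r1' @ [w])" by (simp only: hd_rev)
  have "dwalk A ((s1 @ w # s2') @ [x])" using p'(3) s s2 by simp
  then have a1: "(last (w # s2'), x) \<in> A" unfolding dwalk_append by simp
  have "dwalk A (x # (r1' @ w # r2))" using q'(3) r r1 by simp
  then have "(x, hd (r1' @ w # r2)) \<in> A" by (simp add: dwalk_Cons)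
  moreover have "hd (r1' @ w # r2) = hd (r1' @ [w])" by (cases r1') auto
  ultimately have a2: "(x, last (w # s2')) \<in> A" using bc by simp
  show False using a1 a2 T unfolding oriented_tree_def by blast
qed

lemma tp_take:
  assumes h: "temporal_path A lam vs ts" and i: "i < length vs"
  shows "temporal_path A lam (take (Suc i) vs) (take i ts)"
proof -
  have l: "length ts = length vs - 1" using h by (simp add: temporal_path_def)
  show ?thesis unfolding temporal_path_def
  proof (intro conjI allI impI)
    show "take (Suc i) vs \<noteq> []" using i by (cases vs) auto
    show "length (take i ts) = length (take (Suc i) vs) - 1" using l i by simp
    show "distinct (take (Suc i) vs)" using h by (simp add: temporal_path_def)
    show "sorted_wrt (<) (take i ts)" using h by (simp add: temporal_path_def sorted_wrt_take)
    fix l assume "l < length (take i ts)"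
    then have ll: "l < i" "l < length ts" by auto
    then show "(take (Suc i) vs ! l, take (Suc i) vs ! Suc l) \<in> A"
         "take i ts ! l \<in> lam (take (Suc i) vs ! l, take (Suc i) vs ! Suc l)"
      using h by (auto simp: temporal_path_def)
  qed
qed

lemma tp_drop:
  assumes h: "temporal_path A lam vs ts" and i: "i < length vs"
  shows "temporal_path A lam (drop i vs) (drop i ts)"
proof -
  have l: "length ts = length vs - 1" using h by (simp add: temporal_path_def)
  show ?thesis unfolding temporal_path_def
  proof (intro conjI allI impI)
    show "drop i vs \<noteq> []" using i by simp
    show "length (drop i ts) = length (drop i vs) - 1" using l i by simp
    show "distinct (drop i vs)" using h by (simp add: temporal_path_def)
    show "sorted_wrt (<) (drop i ts)" using h by (simp add: temporal_path_def sorted_wrt_drop)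
    fix l assume "l < length (drop i ts)"
    then have ll: "i + l < length ts" by auto
    then show "(drop i vs ! l, drop i vs ! Suc l) \<in> A"
         "drop i ts ! l \<in> lam (drop i vs ! l, drop i vs ! Suc l)"
      using h l i unfolding temporal_path_def by auto
  qed
qed

lemma conn_edge_sym: "conn_edge V A lam u v = conn_edge V A lam v u"
  unfolding conn_edge_def by auto

lemma tp_setV:
  assumes AV: "A \<subseteq> V \<times> V" and h: "temporal_path A lam vs ts" and u: "hd vs \<in> V"
  shows "set vs \<subseteq> V"
proof (cases "length vs \<ge> 2")
  case True then show ?thesis using uwalk_adj_V[OF AV] tp_basic[OF h] by blast
next
  case False
  then have "vs = [hd vs]" using tp_basic[OF h]
    by (cases vs) (auto, metis Suc_leI length_greater_0_conv list.size(4) numeral_2_eq_2 Suc_le_mono le0 not_less_eq_eq length_0_conv)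
  then show ?thesis using u by (metis empty_subsetI insert_subset list.set(1) list.set(2))
qed

lemma tp_inner:
  assumes AV: "A \<subseteq> V \<times> V" and h: "temporal_path A lam vs ts" and u: "hd vs \<in> V"
    and c: "c \<in> set vs" "c \<noteq> hd vs" "c \<noteq> last vs"
  shows "conn_edge V A lam c (hd vs) \<and> conn_edge V A lam c (last vs)"
proof -
  have sV: "set vs \<subseteq> V" using tp_setV[OF AV h u] .
  have ne: "vs \<noteq> []" using tp_basic[OF h] by simp
  obtain i where i: "i < length vs" "vs ! i = c" using c(1) by (meson in_set_conv_nth)
  have t1: "temporal_path A lam (take (Suc i) vs) (take i ts)" using tp_take[OF h i(1)] .
  have "hd (take (Suc i) vs) = hd vs" using ne by (simp add: hd_take)
  moreover have "last (take (Suc i) vs) = c" using i by (simp add: take_Suc_conv_app_nth)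
  ultimately have r1: "temporal_path_from_to A lam (hd vs) c"
    unfolding temporal_path_from_to_def using t1 by metis
  have t2: "temporal_path A lam (drop i vs) (drop i ts)" using tp_drop[OF h i(1)] .
  have "hd (drop i vs) = c" using i by (simp add: hd_drop_conv_nth)
  moreover have "last (drop i vs) = last vs" using i by simp
  ultimately have r2: "temporal_path_from_to A lam c (last vs)"
    unfolding temporal_path_from_to_def using t2 by metis
  have "last vs \<in> V" using sV ne by auto
  then show ?thesis using r1 r2 sV c u i unfolding conn_edge_def by auto
qed

lemma edge_walk:
  assumes AV: "A \<subseteq> V \<times> V" and e: "conn_edge V A lam u v"
  shows "\<exists>W. uwalk A W \<and> W \<noteq> [] \<and> hd W = u \<and> last W = v \<and>
     (\<forall>c\<in>set W. c = u \<or> c = v \<or> (conn_edge V A lam c u \<and> conn_edge V A lam c v))"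
proof -
  have uv: "u \<in> V" "v \<in> V" using e by (auto simp: conn_edge_def)
  from e have "temporal_path_from_to A lam u v \<or> temporal_path_from_to A lam v u"
    by (simp add: conn_edge_def)
  then show ?thesis
  proof
    assume "temporal_path_from_to A lam u v"
    then obtain vs ts where h: "temporal_path A lam vs ts" "hd vs = u" "last vs = v"
      by (auto simp: temporal_path_from_to_def)
    show ?thesis
      apply (rule exI[of _ vs])
      using tp_basic[OF h(1)] tp_inner[OF AV h(1)] h uv by auto
  next
    assume "temporal_path_from_to A lam v u"
    then obtain vs ts where h: "temporal_path A lam vs ts" "hd vs = v" "last vs = u"
      by (auto simp: temporal_path_from_to_def)
    have ne: "vs \<noteq> []" using tp_basic[OF h(1)] by simp
    show ?thesis
      apply (rule exI[of _ "rev vs"])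
      using tp_basic[OF h(1)] tp_inner[OF AV h(1)] h uv ne
      by (auto simp: uwalk_rev hd_rev last_rev)
  qed
qed

lemma no_through:
  assumes T: "oriented_tree V A"
    and p: "temporal_path A lam vs1 ts1" "hd vs1 = y" "last vs1 = x"
    and q: "temporal_path A lam vs2 ts2" "hd vs2 = x" "last vs2 = z"
    and W: "uwalk A W" "W \<noteq> []" "hd W = y" "last W = z" "x \<notin> set W"
  shows False
proof -
  have p': "vs1 \<noteq> []" "distinct vs1" "uwalk A vs1" using tp_basic[OF p(1)] by auto
  have q': "vs2 \<noteq> []" "distinct vs2" "uwalk A vs2" using tp_basic[OF q(1)] by auto
  obtain t where t: "vs2 = x # t" using q'(1) q(2) by (cases vs2) auto
  define r where "r = vs1 @ t"
  have dt: "distinct t" "x \<notin> set t" using q'(2) t by auto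
  have disj: "set vs1 \<inter> set t = {}"
  proof (rule ccontr)
    assume "set vs1 \<inter> set t \<noteq> {}"
    then obtain c where c: "c \<in> set vs1" "c \<in> set t" by blast
    then have "c \<noteq> x" using dt by auto
    moreover have "c \<in> set vs2" using c t by simp
    ultimately show False using opp[OF T p(1) q(1) p(3) q(2) c(1)] by blast
  qed
  have dr: "distinct r" unfolding r_def using p'(2) dt disj by simp
  have ur: "uwalk A r" unfolding r_def uwalk_append
    using p'(3) q'(3) t p(3) by (simp add: uwalk_Cons)
  have hr: "hd r = y" "r \<noteq> []" unfolding r_def using p'(1) p(2) by auto
  have lr: "last r = z" unfolding r_def using p q t p'(1) by (cases t) auto
  have xr: "x \<in> set r" unfolding r_def using p'(1) p(3) by auto
  obtain s where s: "uwalk A s" "distinct s" "s \<noteq> []" "hd s = y" "last s = z" "set s \<subseteq> set W"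
    using shortcut[OF W(1) W(2)] W by auto
  have "r = s" using unique_path[OF T ur dr s(1) s(2) hr(2) s(3)] hr lr s by simp
  then show False using xr s(6) W(5) by auto
qed

lemma suc_mod: "x < k \<Longrightarrow> (x + 1) mod (k::nat) = (if x + 1 = k then 0 else x + 1)"
  by auto

lemma pred_mod: "x < k \<Longrightarrow> (x + k - 1) mod (k::nat) = (if x = 0 then k - 1 else x - 1)"
proof (cases "x = 0")
  case True
  assume "x < k" then show ?thesis using True by simp
next
  case False
  assume "x < k"
  then have e: "x + k - 1 = (x - 1) + k" using False by simp
  have "(x + k - 1) mod k = ((x - 1) + k) mod k" by (simp only: e)
  also have "\<dots> = (x - 1) mod k" by simp
  also have "\<dots> = x - 1" using \<open>x < k\<close> by simp
  finally show ?thesis using False by simp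
qed

definition adjk :: "nat \<Rightarrow> nat \<Rightarrow> nat \<Rightarrow> bool" where
  "adjk k i j \<longleftrightarrow> i \<noteq> j \<and> \<not> (j = (i + 1) mod k \<or> i = (j + 1) mod k)"

lemma nx_inj: "x < k \<Longrightarrow> y < k \<Longrightarrow> (x + 1) mod (k::nat) = (y + 1) mod k \<Longrightarrow> x = y"
  using suc_mod[of x k] suc_mod[of y k] by (auto split: if_splits)

lemma arith_facts:
  assumes k: "k \<ge> 5" and j: "j < k"
  shows "adjk k ((j + k - 1) mod k) ((j + 1) mod k)" "\<not> adjk k j ((j + 1) mod k)"
    "\<not> adjk k j ((j + k - 1) mod k)" "(j + 1) mod k < k" "(j + k - 1) mod k < k"
    "(j + 1) mod k \<noteq> j" "(j + k - 1) mod k \<noteq> j" "((j + k - 1) mod k + 1) mod k = j"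
    "(j + k - 1) mod k \<noteq> (j + 1) mod k"
proof -
  have j1: "(j + 1) mod k = (if j + 1 = k then 0 else j + 1)" using suc_mod j by blast
  have j0: "(j + k - 1) mod k = (if j = 0 then k - 1 else j - 1)" using pred_mod j by blast
  have j2: "((j + 1) mod k + 1) mod k = (if j + 1 = k then 1 else if j + 2 = k then 0 else j + 2)"
    unfolding j1 using k j by (auto simp: suc_mod)
  have j00: "((j + k - 1) mod k + 1) mod k = j"
    unfolding j0 using k j by (auto simp: suc_mod)
  show "((j + k - 1) mod k + 1) mod k = j" by (rule j00)
  show "(j + 1) mod k \<noteq> j" "(j + k - 1) mod k \<noteq> j" unfolding j1 j0 using k j by auto
  show "(j + k - 1) mod k \<noteq> (j + 1) mod k" unfolding j1 j0 using k j by auto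
  show "adjk k ((j + k - 1) mod k) ((j + 1) mod k)"
    unfolding adjk_def j00 j2 unfolding j1 j0 using k j by auto
  show "\<not> adjk k j ((j + 1) mod k)" unfolding adjk_def by simp
  show "\<not> adjk k j ((j + k - 1) mod k)" unfolding adjk_def using j00 by simp
  show "(j + 1) mod k < k" "(j + k - 1) mod k < k" using k by auto
qed

lemma nx3: "j < k \<Longrightarrow> k \<ge> 5 \<Longrightarrow> (((j + 1) mod k + 1) mod k + 1) mod k \<noteq> (j + k - 1) mod (k::nat)"
proof -
  assume j: "j < k" and k: "k \<ge> 5"
  have j0: "(j + k - 1) mod k = (if j = 0 then k - 1 else j - 1)" using pred_mod j by blast
  consider "j + 1 = k" | "j + 2 = k" | "j + 3 = k" | "j + 3 < k" using j by linarith
  then show ?thesis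
  proof cases
    case 1 then have "j + 1 = k" . then show ?thesis unfolding j0 using k j by (auto simp: suc_mod)
  next
    case 2 then show ?thesis unfolding j0 using k j by (auto simp: suc_mod)
  next
    case 3
    have e: "j + 2 + 1 = k" using 3 by simp
    have "(j + 2 + 1) mod k = 0" unfolding e by simp
    moreover have "(j + 1) mod k = j + 1" "(j + 1 + 1) mod k = j + 2" using 3 by auto
    ultimately have "(((j + 1) mod k + 1) mod k + 1) mod k = 0" by simp
    then show ?thesis unfolding j0 using k j 3 by auto
  next
    case 4 then show ?thesis unfolding j0 using k j by (auto simp: suc_mod)
  qed
qed

lemma arith_choice:
  assumes k: "k \<ge> 5" and lt: "a < k" "b < k" "j < k" and ab: "a \<noteq> b"
    and aj: "adjk k a j" and jb: "adjk k j b"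
  shows "(adjk k a ((j + k - 1) mod k) \<and> adjk k ((j + 1) mod k) b) \<or>
         (adjk k a ((j + 1) mod k) \<and> adjk k ((j + k - 1) mod k) b)"
proof -
  define J1 where "J1 = (j + 1) mod k"
  define J0 where "J0 = (j + k - 1) mod k"
  define nx where "nx = (\<lambda>x. (x + 1) mod k)"
  note F = arith_facts[OF k lt(3), folded J1_def J0_def]
  have lt2: "J1 < k" "J0 < k" using F by auto
  have inj: "\<And>x y. x < k \<Longrightarrow> y < k \<Longrightarrow> nx x = nx y \<Longrightarrow> x = y" unfolding nx_def using nx_inj by blast
  have nJ0: "nx J0 = j" using F unfolding nx_def by simp
  have nj: "nx j = J1" unfolding nx_def J1_def by simp
  have A1: "a \<noteq> j" "j \<noteq> nx a" "a \<noteq> J1" using aj unfolding adjk_def nx_def J1_def by auto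
  have B1: "b \<noteq> j" "b \<noteq> J1" "j \<noteq> nx b" using jb unfolding adjk_def nx_def J1_def by auto
  have aJ0: "a \<noteq> J0" using A1(2) nJ0 by auto
  have bJ0: "b \<noteq> J0" using B1(3) nJ0 by auto
  have J01: "J0 \<noteq> J1" using F by simp
  have o1: "adjk k a J0 \<longleftrightarrow> \<not> (J0 = nx a \<or> a = nx J0)" unfolding adjk_def nx_def using aJ0 by auto
  have o2: "adjk k J1 b \<longleftrightarrow> \<not> (b = nx J1 \<or> J1 = nx b)" unfolding adjk_def nx_def using B1 by auto
  have o3: "adjk k a J1 \<longleftrightarrow> \<not> (J1 = nx a \<or> a = nx J1)" unfolding adjk_def nx_def using A1 by auto
  have o4: "adjk k J0 b \<longleftrightarrow> \<not> (b = nx J0 \<or> J0 = nx b)" unfolding adjk_def nx_def using bJ0 by auto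
  have n3: "nx (nx J1) \<noteq> J0" unfolding nx_def J1_def J0_def by (rule nx3[OF lt(3) k])
  have c1: "adjk k a J0 \<or> J0 = nx a" using o1 A1 nJ0 by auto
  have c2: "adjk k J1 b \<or> b = nx J1" using o2 inj[of b j] B1 lt nj by auto
  have c3: "adjk k a J1 \<or> a = nx J1" using o3 inj[of a j] lt A1 nj by auto
  have c4: "adjk k J0 b \<or> J0 = nx b" using o4 B1 nJ0 by auto
  have x1: "\<not> (J0 = nx a \<and> J0 = nx b)" using inj[of a b] lt ab by auto
  have x2: "\<not> (b = nx J1 \<and> a = nx J1)" using ab by auto
  have x3: "\<not> (J0 = nx a \<and> a = nx J1)" using n3 by auto
  have x4: "\<not> (b = nx J1 \<and> J0 = nx b)" using n3 by auto
  show ?thesis unfolding J1_def[symmetric] J0_def[symmetric] using c1 c2 c3 c4 x1 x2 x3 x4 by blast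
qed

lemma join:
  assumes "uwalk A W1" "uwalk A W2" "W1 \<noteq> []" "W2 \<noteq> []" "last W1 = hd W2"
  shows "uwalk A (W1 @ tl W2) \<and> W1 @ tl W2 \<noteq> [] \<and> hd (W1 @ tl W2) = hd W1 \<and>
         last (W1 @ tl W2) = last W2 \<and> set (W1 @ tl W2) \<subseteq> set W1 \<union> set W2"
proof -
  obtain h t where W2: "W2 = h # t" using assms(4) by (cases W2) auto
  have ut: "uwalk A t" "t \<noteq> [] \<longrightarrow> und_adj A h (hd t)" using assms(2) W2 by (auto simp: uwalk_Cons)
  have "uwalk A (W1 @ t)" unfolding uwalk_append using assms(1,5) ut W2 by simp
  moreover have "last (W1 @ t) = last W2" using assms(5) W2 by (cases t) auto
  ultimately show ?thesis using assms(3) W2 by auto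
qed

lemma adjk_sym: "adjk k i l = adjk k l i" unfolding adjk_def by auto

lemma key:
  assumes T: "oriented_tree V A" and k: "k \<ge> 5" and inj: "inj_on f {0..<k}" and img: "f ` {0..<k} \<subseteq> V"
    and H: "\<forall>i<k. \<forall>j<k. i \<noteq> j \<longrightarrow>
        (conn_edge V A lam (f i) (f j) \<longleftrightarrow> \<not> (j = (i + 1) mod k \<or> i = (j + 1) mod k))"
    and lt: "a < k" "b < k" "j < k" and ab: "a \<noteq> b" and aj: "adjk k a j" and jb: "adjk k j b"
    and R1: "temporal_path_from_to A lam (f a) (f j)" and R2: "temporal_path_from_to A lam (f j) (f b)"
  shows False
proof -
  have AV: "A \<subseteq> V \<times> V" using T by (simp add: oriented_tree_def)
  have G: "\<And>i l. i < k \<Longrightarrow> l < k \<Longrightarrow> conn_edge V A lam (f i) (f l) \<longleftrightarrow> adjk k i l"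
  proof -
    fix i l assume il: "i < k" "l < k"
    show "conn_edge V A lam (f i) (f l) \<longleftrightarrow> adjk k i l"
    proof (cases "i = l")
      case True then show ?thesis by (simp add: conn_edge_def adjk_def)
    next
      case False then show ?thesis using H il by (simp add: adjk_def)
    qed
  qed
  have fi: "\<And>i l. i < k \<Longrightarrow> l < k \<Longrightarrow> f i = f l \<longleftrightarrow> i = l" using inj by (auto simp: inj_on_def)
  obtain e d where ed: "e < k" "d < k" "adjk k a e" "adjk k e d" "adjk k d b" "\<not> adjk k j e" "\<not> adjk k j d"
    "e \<noteq> j" "d \<noteq> j"
  proof -
    assume r: "\<And>e d. e < k \<Longrightarrow> d < k \<Longrightarrow> adjk k a e \<Longrightarrow> adjk k e d \<Longrightarrow> adjk k d b \<Longrightarrow>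
       \<not> adjk k j e \<Longrightarrow> \<not> adjk k j d \<Longrightarrow> e \<noteq> j \<Longrightarrow> d \<noteq> j \<Longrightarrow> thesis"
    note F = arith_facts[OF k lt(3)]
    from arith_choice[OF k lt ab aj jb] show thesis
    proof
      assume h: "adjk k a ((j + k - 1) mod k) \<and> adjk k ((j + 1) mod k) b"
      show thesis apply (rule r[of "(j + k - 1) mod k" "(j + 1) mod k"])
        using h F by auto
    next
      assume h: "adjk k a ((j + 1) mod k) \<and> adjk k ((j + k - 1) mod k) b"
      show thesis apply (rule r[of "(j + 1) mod k" "(j + k - 1) mod k"])
        using h F adjk_sym by auto
    qed
  qed
  have x1: "f j \<noteq> f a" "f j \<noteq> f b" "f j \<noteq> f e" "f j \<noteq> f d"
    using fi lt ed aj jb by (auto simp: adjk_def)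
  have ne1: "\<not> conn_edge V A lam (f j) (f e)" "\<not> conn_edge V A lam (f j) (f d)"
    using G lt ed by auto
  obtain W1 where W1: "uwalk A W1" "W1 \<noteq> []" "hd W1 = f a" "last W1 = f e"
    "\<forall>c\<in>set W1. c = f a \<or> c = f e \<or> (conn_edge V A lam c (f a) \<and> conn_edge V A lam c (f e))"
    using edge_walk[OF AV, of lam "f a" "f e"] G lt ed by auto
  obtain W2 where W2: "uwalk A W2" "W2 \<noteq> []" "hd W2 = f e" "last W2 = f d"
    "\<forall>c\<in>set W2. c = f e \<or> c = f d \<or> (conn_edge V A lam c (f e) \<and> conn_edge V A lam c (f d))"
    using edge_walk[OF AV, of lam "f e" "f d"] G lt ed by auto
  obtain W3 where W3: "uwalk A W3" "W3 \<noteq> []" "hd W3 = f d" "last W3 = f b"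
    "\<forall>c\<in>set W3. c = f d \<or> c = f b \<or> (conn_edge V A lam c (f d) \<and> conn_edge V A lam c (f b))"
    using edge_walk[OF AV, of lam "f d" "f b"] G lt ed by auto
  have n1: "f j \<notin> set W1" using W1(5) x1 ne1 by blast
  have n2: "f j \<notin> set W2" using W2(5) x1 ne1 by blast
  have n3: "f j \<notin> set W3" using W3(5) x1 ne1 by blast
  define W12 where "W12 = W1 @ tl W2"
  have J1: "uwalk A W12 \<and> W12 \<noteq> [] \<and> hd W12 = f a \<and> last W12 = f d \<and> set W12 \<subseteq> set W1 \<union> set W2"
    unfolding W12_def using join[OF W1(1) W2(1) W1(2) W2(2)] W1 W2 by simp
  define W where "W = W12 @ tl W3"
  have J2: "uwalk A W \<and> W \<noteq> [] \<and> hd W = f a \<and> last W = f b \<and> set W \<subseteq> set W12 \<union> set W3"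
    unfolding W_def using join[of A W12 W3] J1 W3 by simp
  have nW: "f j \<notin> set W" using J1 J2 n1 n2 n3 by blast
  obtain vs1 ts1 where p: "temporal_path A lam vs1 ts1" "hd vs1 = f a" "last vs1 = f j"
    using R1 by (auto simp: temporal_path_from_to_def)
  obtain vs2 ts2 where q: "temporal_path A lam vs2 ts2" "hd vs2 = f j" "last vs2 = f b"
    using R2 by (auto simp: temporal_path_from_to_def)
  show False using no_through[OF T p q] J2 nW by blast
qed

theorem mainTheorem12:
  fixes V :: "'a set" and A :: "('a \<times> 'a) set" and lam :: "'a \<times> 'a \<Rightarrow> nat set"
    and tmax :: nat
  assumes "oriented_tree V A"
    and "\<forall>a \<in> A. lam a \<subseteq> {1..tmax}"
  shows "\<not> has_antihole V (conn_edge V A lam)"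
proof
  note T = assms(1)
  assume "has_antihole V (conn_edge V A lam)"
  then obtain k and f :: "nat \<Rightarrow> 'a" where k: "k \<ge> 5" and inj: "inj_on f {0..<k}" and img: "f ` {0..<k} \<subseteq> V"
    and H: "\<forall>i<k. \<forall>j<k. i \<noteq> j \<longrightarrow>
        (conn_edge V A lam (f i) (f j) \<longleftrightarrow> \<not> (j = (i + 1) mod k \<or> i = (j + 1) mod k))"
    unfolding has_antihole_def by blast
  have G: "\<And>i l. i < k \<Longrightarrow> l < k \<Longrightarrow> conn_edge V A lam (f i) (f l) \<longleftrightarrow> adjk k i l"
  proof -
    fix i l assume il: "i < k" "l < k"
    show "conn_edge V A lam (f i) (f l) \<longleftrightarrow> adjk k i l"
    proof (cases "i = l")
      case True then show ?thesis by (simp add: conn_edge_def adjk_def)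
    next
      case False then show ?thesis using H il by (simp add: adjk_def)
    qed
  qed
  have fi: "\<And>i l. i < k \<Longrightarrow> l < k \<Longrightarrow> f i = f l \<longleftrightarrow> i = l" using inj by (auto simp: inj_on_def)
  define t where "t i = (\<exists>l<k. l \<noteq> i \<and> temporal_path_from_to A lam (f i) (f l))" for i
  have claim: "t a \<and> \<not> t b" if ab: "a < k" "b < k" "adjk k a b" and R: "temporal_path_from_to A lam (f a) (f b)" for a b
  proof
    have "a \<noteq> b" using ab by (simp add: adjk_def)
    then show "t a" unfolding t_def using ab R by blast
    show "\<not> t b"
    proof
      assume "t b"
      then obtain l where l: "l < k" "l \<noteq> b" "temporal_path_from_to A lam (f b) (f l)" unfolding t_def by blast
      show False
      proof (cases "l = a")
        case True
        obtain vs1 ts1 where p: "temporal_path A lam vs1 ts1" "hd vs1 = f a" "last vs1 = f b"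
          using R by (auto simp: temporal_path_from_to_def)
        obtain vs2 ts2 where q: "temporal_path A lam vs2 ts2" "hd vs2 = f b" "last vs2 = f a"
          using l(3) True by (auto simp: temporal_path_from_to_def)
        have "vs1 \<noteq> []" "vs2 \<noteq> []" using tp_basic p(1) q(1) by auto
        then have "f a \<in> set vs1" "f a \<in> set vs2" using p q by (metis hd_in_set, metis last_in_set)
        moreover have "f a \<noteq> f b" using fi ab \<open>a \<noteq> b\<close> by auto
        ultimately show False using opp[OF T p(1) q(1) p(3) q(2)] by blast
      next
        case False
        have "f b \<in> V" "f l \<in> V" using img ab l by auto
        moreover have "f b \<noteq> f l" using fi ab l by auto
        ultimately have "conn_edge V A lam (f b) (f l)" using l(3) by (simp add: conn_edge_def)
        then have bl: "adjk k b l" using G ab l by auto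
        show False using key[OF T k inj img H ab(1) l(1) ab(2) False[symmetric] ab(3) bl R l(3)] .
      qed
    qed
  qed
  have alt: "t a \<noteq> t b" if ab: "a < k" "b < k" "adjk k a b" for a b
  proof -
    have "conn_edge V A lam (f a) (f b)" using G ab by auto
    then have "temporal_path_from_to A lam (f a) (f b) \<or> temporal_path_from_to A lam (f b) (f a)"
      by (simp add: conn_edge_def)
    then show ?thesis
    proof
      assume "temporal_path_from_to A lam (f a) (f b)"
      then show ?thesis using claim[OF ab] by auto
    next
      assume "temporal_path_from_to A lam (f b) (f a)"
      then show ?thesis using claim[OF ab(2) ab(1)] ab(3) adjk_sym by metis
    qed
  qed
  have m: "\<And>x. x < k \<Longrightarrow> (x + 1) mod k = (if x + 1 = k then 0 else x + 1)" using suc_mod by blast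
  have lts: "0 < k" "1 < k" "2 < k" "3 < k" "4 < k" using k by auto
  have e1: "adjk k 0 2" unfolding adjk_def using k m[of 0] m[of 2] by auto
  have e2: "adjk k 2 4" unfolding adjk_def using k m[of 2] m[of 4] by auto
  have e3: "adjk k 4 1" unfolding adjk_def using k m[of 4] m[of 1] by auto
  have e4: "adjk k 1 3" unfolding adjk_def using k m[of 1] m[of 3] by auto
  have e5: "adjk k 3 0" unfolding adjk_def using k m[of 3] m[of 0] by auto
  have "t 0 \<noteq> t 2" "t 2 \<noteq> t 4" "t 4 \<noteq> t 1" "t 1 \<noteq> t 3" "t 3 \<noteq> t 0"
    using alt[OF lts(1) lts(3) e1] alt[OF lts(3) lts(5) e2] alt[OF lts(5) lts(2) e3]
      alt[OF lts(2) lts(4) e4] alt[OF lts(4) lts(1) e5] by auto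
  then show False by blast
qed

end
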